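(* Let $w$ be a word of length $n \geq 9$ over some alphabet such that $w$ contains no $3$-antipower as a factor and $w$ contains exactly three distinct letters. Then, up to a bijective renaming of the letters (to $0,1,2$), the following hold: (a) if $n \equiv 0 \pmod 3$, there is no such $w$; (b) if $n \equiv 1 \pmod 3$, then $w = 01^{n-2}2$; (c) if $n \equiv 2 \pmod 3$, then $w$ is one of $001^{n-3}2$, $010^{n-3}2$, $01^{n-2}2$, $01^{n-3}21$, or $01^{n-3}22$.
   Context: A $3$-antipower is a word $u_1u_2u_3$ with $|u_1|=|u_2|=|u_3|$ and $u_1,u_2,u_3$ pairwise distinct; a factor is a contiguous subword. $a^m$ denotes $m$ consecutive copies of the letter $a$. *)

theory Defs
  imports Main "HOL-Library.Sublist"
begin

definition antipower3 :: "'a list \<Rightarrow> bool" where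
  "antipower3 x \<longleftrightarrow> (\<exists>u1 u2 u3. x = u1 @ u2 @ u3 \<and>
      length u1 = length u2 \<and> length u2 = length u3 \<and>
      u1 \<noteq> u2 \<and> u1 \<noteq> u3 \<and> u2 \<noteq> u3)"

definition has_3antipower_factor :: "'a list \<Rightarrow> bool" where
  "has_3antipower_factor w \<longleftrightarrow> (\<exists>x. sublist x w \<and> antipower3 x)"

end

theory Submission
  imports Defs
begin


lemma antipower3_map: "antipower3 (map f y) \<Longrightarrow> antipower3 y"
proof -
  assume "antipower3 (map f y)"
  then obtain u1 u2 u3 where e: "map f y = u1 @ u2 @ u3" and l: "length u1 = length u2" "length u2 = length u3"
    and d: "u1 \<noteq> u2" "u1 \<noteq> u3" "u2 \<noteq> u3" unfolding antipower3_def by blast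
  from e obtain y1 y23 where "y = y1 @ y23" "map f y1 = u1" "map f y23 = u2 @ u3"
    by (metis map_eq_append_conv)
  moreover from this(3) obtain y2 y3 where "y23 = y2 @ y3" "map f y2 = u2" "map f y3 = u3"
    by (metis map_eq_append_conv)
  ultimately show ?thesis unfolding antipower3_def using l d
    by (rule_tac x=y1 in exI, rule_tac x=y2 in exI, rule_tac x=y3 in exI) auto
qed

lemma has_map: "has_3antipower_factor (map f w) \<Longrightarrow> has_3antipower_factor w"
proof -
  assume "has_3antipower_factor (map f w)"
  then obtain x where s: "sublist x (map f w)" and a: "antipower3 x"
    unfolding has_3antipower_factor_def by blast
  from s obtain ps ss where "map f w = ps @ x @ ss" unfolding sublist_def by blast
  then obtain ps' yss where "w = ps' @ yss" "map f yss = x @ ss"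
    by (metis map_eq_append_conv)
  moreover then obtain y ss' where "yss = y @ ss'" "map f y = x"
    by (metis map_eq_append_conv)
  ultimately have "w = ps' @ y @ ss'" "map f y = x" by auto
  then show ?thesis unfolding has_3antipower_factor_def using a antipower3_map
    by (metis sublist_appendI)
qed

lemma antipower3_rev: "antipower3 x \<Longrightarrow> antipower3 (rev x)"
  unfolding antipower3_def
  by (elim exE conjE, rule_tac x="rev u3" in exI, rule_tac x="rev u2" in exI, rule_tac x="rev u1" in exI) auto

lemma has_rev: "has_3antipower_factor (rev w) \<Longrightarrow> has_3antipower_factor w"
  unfolding has_3antipower_factor_def
  by (metis antipower3_rev sublist_rev_right)

lemma whole_anti:
  assumes "length w = 3*q" "i1 < q" "w!i1 \<noteq> w!(q+i1)" "i2 < q" "w!i2 \<noteq> w!(2*q+i2)"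
    "i3 < q" "w!(q+i3) \<noteq> w!(2*q+i3)"
  shows "has_3antipower_factor w"
proof -
  define u1 where "u1 = take q w"
  define u2 where "u2 = take q (drop q w)"
  define u3 where "u3 = drop (2*q) w"
  have e: "w = u1 @ u2 @ u3" unfolding u1_def u2_def u3_def
    by (metis append_take_drop_id drop_drop mult_2 add.commute)
  have l: "length u1 = q" "length u2 = q" "length u3 = q" using assms(1) by (auto simp: u1_def u2_def u3_def)
  have "u1 ! i1 \<noteq> u2 ! i1" using assms(1-3) by (simp add: u1_def u2_def add.commute)
  hence d1: "u1 \<noteq> u2" by auto
  have "u1 ! i2 \<noteq> u3 ! i2" using assms(1,4,5) by (simp add: u1_def u3_def add.commute)
  hence d2: "u1 \<noteq> u3" by auto
  have "u2 ! i3 \<noteq> u3 ! i3" using assms(1,6,7) by (simp add: u2_def u3_def add.commute)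
  hence d3: "u2 \<noteq> u3" by auto
  have "antipower3 w" unfolding antipower3_def using e l d1 d2 d3 by (intro exI[of _ u1] exI[of _ u2] exI[of _ u3]) simp
  thus ?thesis unfolding has_3antipower_factor_def by blast
qed


definition anti3 :: "nat list \<Rightarrow> bool" where
"anti3 x = (let k = length x div 3 in take k x \<noteq> take k (drop k x) \<and> take k x \<noteq> drop (2*k) x \<and> take k (drop k x) \<noteq> drop (2*k) x)"
definition suf_ok :: "nat list \<Rightarrow> bool" where
"suf_ok w = list_all (\<lambda>k. \<not> anti3 (drop (length w - 3*k) w)) [1..<length w div 3 + 1]"
fun gen :: "nat \<Rightarrow> nat list list" where
"gen 0 = [[]]" | "gen (Suc n) = concat (map (\<lambda>w. filter suf_ok (map (\<lambda>x. w@[x]) [0,1,2])) (gen n))"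

lemma anti3_has:
  assumes "anti3 (drop (length w - 3*k) w)" "k \<le> length w div 3"
  shows "has_3antipower_factor w"
proof -
  define x where "x = drop (length w - 3*k) w"
  have lx: "length x = 3*k" using assms(2) unfolding x_def by auto
  have a: "anti3 x" using assms(1) x_def by simp
  define u1 where "u1 = take k x"
  define u2 where "u2 = take k (drop k x)"
  define u3 where "u3 = drop (2*k) x"
  have e: "x = u1 @ u2 @ u3" unfolding u1_def u2_def u3_def
    by (metis append_take_drop_id drop_drop mult_2 add.commute)
  have l: "length u1 = k" "length u2 = k" "length u3 = k" using lx by (auto simp: u1_def u2_def u3_def)
  have "u1 \<noteq> u2 \<and> u1 \<noteq> u3 \<and> u2 \<noteq> u3" using a lx unfolding anti3_def u1_def u2_def u3_def Let_def by simp
  hence "antipower3 x" unfolding antipower3_def using e l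
    by (intro exI[of _ u1] exI[of _ u2] exI[of _ u3]) simp
  moreover have "sublist x w" unfolding x_def by (simp add: suffix_drop)
  ultimately show ?thesis unfolding has_3antipower_factor_def by blast
qed

lemma has_butlast: "has_3antipower_factor (butlast w) \<Longrightarrow> has_3antipower_factor w"
  unfolding has_3antipower_factor_def
  by (metis append_butlast_last_id butlast.simps(1) sublist_append_rightI sublist_order.order.trans)

lemma gen_Suc_mem:
  assumes "b \<in> set (gen n)" "x \<in> {0,1,2}" "suf_ok (b@[x])"
  shows "b@[x] \<in> set (gen (Suc n))"
proof -
  have "b@[x] \<in> set (filter suf_ok (map (\<lambda>x. b @ [x]) [0,1,2]))" using assms(2,3) by auto
  thus ?thesis using assms(1) by (simp only: gen.simps set_concat set_map) blast
qed

lemma gen_complete: "length w = n \<Longrightarrow> set w \<subseteq> {0,1,2} \<Longrightarrow> \<not> has_3antipower_factor w \<Longrightarrow> w \<in> set (gen n)"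
proof (induction n arbitrary: w)
  case 0
  then show ?case by simp
next
  case (Suc n)
  then have ne: "w \<noteq> []" by auto
  have wb: "w = butlast w @ [last w]" using ne by simp
  have "butlast w \<in> set (gen n)"
    using Suc.IH[of "butlast w"] Suc.prems has_butlast by (auto dest: in_set_butlastD)
  moreover have "last w \<in> {0,1,2}" using Suc.prems ne last_in_set by blast
  moreover have "suf_ok w" unfolding suf_ok_def list_all_iff
    using anti3_has[of w] Suc.prems(3) by (auto simp: less_Suc_eq_le) (meson less_imp_le)
  ultimately have "butlast w @ [last w] \<in> set (gen (Suc n))" using wb
    by (intro gen_Suc_mem) simp_all
  then show ?case using wb by simp
qed



definition L :: "nat \<Rightarrow> nat list set" where
"L n = (if n mod 3 = 1 then {[0] @ replicate (n - 2) 1 @ [2]}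
        else if n mod 3 = 2 then { [0, 0] @ replicate (n - 3) 1 @ [2],
                        [0, 1] @ replicate (n - 3) 0 @ [2],
                        [0] @ replicate (n - 2) 1 @ [2],
                        [0] @ replicate (n - 3) 1 @ [2, 1],
                        [0] @ replicate (n - 3) 1 @ [2, 2] } else {})"

lemma mod0_cases:
  assumes "q \<ge> 4"
  shows "has_3antipower_factor ([0, 0] @ replicate (3*q - 4) 1 @ [2, 0] :: nat list)"
    "has_3antipower_factor ([0, 0] @ replicate (3*q - 4) 1 @ [2, 1] :: nat list)"
    "has_3antipower_factor ([0, 0] @ replicate (3*q - 4) 1 @ [2, 2] :: nat list)"
    "has_3antipower_factor ([0, 1] @ replicate (3*q - 4) 0 @ [2, 0] :: nat list)"
    "has_3antipower_factor ([0, 1] @ replicate (3*q - 4) 0 @ [2, 1] :: nat list)"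
    "has_3antipower_factor ([0, 1] @ replicate (3*q - 4) 0 @ [2, 2] :: nat list)"
    "has_3antipower_factor ([0] @ replicate (3*q - 3) 1 @ [2, 0] :: nat list)"
    "has_3antipower_factor ([0] @ replicate (3*q - 3) 1 @ [2, 1] :: nat list)"
    "has_3antipower_factor ([0] @ replicate (3*q - 3) 1 @ [2, 2] :: nat list)"
    "has_3antipower_factor ([0] @ replicate (3*q - 4) 1 @ [2, 1, 0] :: nat list)"
    "has_3antipower_factor ([0] @ replicate (3*q - 4) 1 @ [2, 1, 1] :: nat list)"
    "has_3antipower_factor ([0] @ replicate (3*q - 4) 1 @ [2, 1, 2] :: nat list)"
    "has_3antipower_factor ([0] @ replicate (3*q - 4) 1 @ [2, 2, 0] :: nat list)"
    "has_3antipower_factor ([0] @ replicate (3*q - 4) 1 @ [2, 2, 1] :: nat list)"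
    "has_3antipower_factor ([0] @ replicate (3*q - 4) 1 @ [2, 2, 2] :: nat list)"
    "has_3antipower_factor ([0] @ replicate (3*q - 2) 1 @ [2::nat] :: nat list)"
  using assms
  apply -
  subgoal by (rule whole_anti[of _ q 0 0 "q-1"]; auto simp: nth_append)
  subgoal by (rule whole_anti[of _ q 0 0 "q-2"]; auto simp: nth_append)
  subgoal by (rule whole_anti[of _ q 0 0 "q-1"]; auto simp: nth_append)
  subgoal by (rule whole_anti[of _ q 1 1 "q-2"]; auto simp: nth_append)
  subgoal by (rule whole_anti[of _ q 1 1 "q-1"]; auto simp: nth_append)
  subgoal by (rule whole_anti[of _ q 1 1 "q-1"]; auto simp: nth_append)
  subgoal by (rule whole_anti[of _ q 0 0 "q-1"]; auto simp: nth_append)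
  subgoal by (rule whole_anti[of _ q 0 0 "q-2"]; auto simp: nth_append)
  subgoal by (rule whole_anti[of _ q 0 0 "q-1"]; auto simp: nth_append)
  subgoal by (rule whole_anti[of _ q 0 0 "q-1"]; auto simp: nth_append)
  subgoal by (rule whole_anti[of _ q 0 0 "q-3"]; auto simp: nth_append)
  subgoal by (rule whole_anti[of _ q 0 0 "q-1"]; auto simp: nth_append)
  subgoal by (rule whole_anti[of _ q 0 0 "q-1"]; auto simp: nth_append)
  subgoal by (rule whole_anti[of _ q 0 0 "q-2"]; auto simp: nth_append)
  subgoal by (rule whole_anti[of _ q 0 0 "q-1"]; auto simp: nth_append)
  subgoal by (rule whole_anti[of _ q 0 0 "q-1"]; auto simp: nth_append)
  done


lemma gen9: "list_all (\<lambda>w. \<not>(0 \<in> set w \<and> 1 \<in> set w \<and> 2 \<in> set w)) (gen 9)"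
  by code_simp

lemma base9:
  assumes "length w = 9" "set w = {0,1,2::nat}"
  shows "has_3antipower_factor w"
proof (rule ccontr)
  assume "\<not> has_3antipower_factor w"
  hence "w \<in> set (gen 9)" using gen_complete[of w 9] assms by auto
  thus False using gen9 assms(2) by (auto simp: list_all_iff)
qed

lemma has_120: "m \<ge> 1 \<Longrightarrow> has_3antipower_factor ([0] @ replicate m 1 @ [2, 0::nat])"
proof -
  assume "m \<ge> 1"
  then have e: "[0] @ replicate m 1 @ [2, 0::nat] = ([0] @ replicate (m - 1) 1) @ [1, 2, 0] @ []"
    by (cases m) (auto simp: replicate_append_same)
  have "antipower3 [1, 2, 0::nat]" unfolding antipower3_def
    by (intro exI[of _ "[1]"] exI[of _ "[2]"] exI[of _ "[0]"]) simp
  thus ?thesis unfolding has_3antipower_factor_def e by (meson sublist_appendI)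
qed

lemma L_right:
  assumes "n \<ge> 9" "v \<in> L n" "y \<in> {0,1,2}" "\<not> has_3antipower_factor (v @ [y])"
  shows "v @ [y] \<in> L (Suc n)"
proof -
  consider "n mod 3 = 0" | "n mod 3 = 1" | "n mod 3 = 2" by linarith
  then show ?thesis
  proof cases
    case 1
    then show ?thesis using assms(2) by (simp add: L_def)
  next
    case 2
    then have v: "v = [0] @ replicate (n - 2) 1 @ [2]" using assms(2) by (simp add: L_def)
    have s: "Suc n mod 3 = 2" using 2 by presburger
    have "y \<noteq> 0"
    proof
      assume "y = 0"
      with has_120[of "n - 2"] assms(1,4) v show False by auto
    qed
    then show ?thesis using assms(3) s v
      by (auto simp: L_def)
  next
    case 3
    define q where "q = Suc n div 3"
    have q: "Suc n = 3 * q" using 3 unfolding q_def by presburger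
    have q4: "q \<ge> 4" using q assms(1) by linarith
    have n3: "n - 3 = 3*q - 4" "n - 2 = 3*q - 3" using q by auto
    have "has_3antipower_factor (v @ [y])"
      using assms(2,3) 3 mod0_cases[OF q4] unfolding L_def n3 by auto
    then show ?thesis using assms(4) by blast
  qed
qed



lemma bij_sw: "bij_betw (\<lambda>x::nat. 2 - x) {0,1,2} {0,1,2}"
  by (auto simp: bij_betw_def inj_on_def image_def)
lemma bij_p1: "bij_betw (\<lambda>x::nat. (x + 1) mod 3) {0,1,2} {0,1,2}"
  by (auto simp: bij_betw_def inj_on_def image_def)
lemma bij_p2: "bij_betw (\<lambda>x::nat. (x + 2) mod 3) {0,1,2} {0,1,2}"
  by (auto simp: bij_betw_def inj_on_def image_def)

lemma L_rev:
  assumes "v \<in> L n"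
  shows "\<exists>g. bij_betw g {0,1,2} {0,1,2::nat} \<and> map g (rev v) \<in> L n"
proof -
  have "map (\<lambda>x::nat. 2 - x) (rev v) \<in> L n \<or> map (\<lambda>x::nat. (x + 1) mod 3) (rev v) \<in> L n
     \<or> map (\<lambda>x::nat. (x + 2) mod 3) (rev v) \<in> L n"
    using assms by (auto simp: L_def split: if_splits)
  thus ?thesis using bij_sw bij_p1 bij_p2 by blast
qed

lemma card3_bij: "card (set w) = 3 \<Longrightarrow> \<exists>f. bij_betw f (set w) {0,1,2::nat}"
  by (rule finite_same_card_bij) auto

lemma step_right:
  fixes w :: "'a list"
  assumes IH: "\<And>u::'a list. length u = n \<Longrightarrow> \<not> has_3antipower_factor u \<Longrightarrow> card (set u) = 3 \<Longrightarrow>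
       \<exists>f. bij_betw f (set u) {0,1,2::nat} \<and> map f u \<in> L n"
    and n9: "n \<ge> 9" and lw: "length w = Suc n" and nh: "\<not> has_3antipower_factor w"
    and c: "card (set w) = 3" and cb: "card (set (butlast w)) = 3"
  shows "\<exists>f. bij_betw f (set w) {0,1,2::nat} \<and> map f w \<in> L (Suc n)"
proof -
  have ne: "w \<noteq> []" using lw by auto
  have wb: "w = butlast w @ [last w]" using ne by simp
  have "set (butlast w) \<subseteq> set w" by (meson in_set_butlastD subsetI)
  hence sb: "set (butlast w) = set w" using c cb by (metis card_subset_eq finite_set)
  obtain f where f: "bij_betw f (set (butlast w)) {0,1,2::nat}" "map f (butlast w) \<in> L n"
    using IH[of "butlast w"] lw cb nh has_butlast by auto
  have "last w \<in> set (butlast w)" using sb ne by simp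
  hence fl: "f (last w) \<in> {0,1,2}" by (rule bij_betw_apply[OF f(1)])
  have "\<not> has_3antipower_factor (map f w)" using nh has_map by metis
  moreover have mw: "map f w = map f (butlast w) @ [f (last w)]" by (subst wb) simp
  ultimately have "\<not> has_3antipower_factor (map f (butlast w) @ [f (last w)])" by simp
  hence "map f (butlast w) @ [f (last w)] \<in> L (Suc n)" using L_right[OF n9 f(2) fl] by blast
  hence "map f w \<in> L (Suc n)" using mw by simp
  thus ?thesis using f(1) sb by metis
qed



lemma has_rev_iff: "has_3antipower_factor (rev w) = has_3antipower_factor w"
  by (metis has_rev rev_rev_ident)

lemma both_unique:
  fixes w :: "'a list"
  assumes n9: "n \<ge> 9" and lw: "length w = Suc n" and nh: "\<not> has_3antipower_factor w"
    and c: "card (set w) = 3" and cb: "card (set (butlast w)) \<noteq> 3" and ct: "card (set (tl w)) \<noteq> 3"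
  shows "\<exists>f. bij_betw f (set w) {0,1,2::nat} \<and> map f w \<in> L (Suc n)"
proof -
  obtain a t where wt: "w = a # t" using lw by (cases w) auto
  have "t \<noteq> []" using wt lw n9 by auto
  hence "w = a # butlast t @ [last t]" using wt by simp
  then obtain m b where w: "w = a # m @ [b]" by blast
  have lm: "length m = n - 1" using lw w by simp
  have bn: "b \<notin> set (a # m)"
  proof
    assume "b \<in> set (a # m)"
    hence "set (butlast w) = set w" using w by (auto simp: butlast_append)
    thus False using c cb by simp
  qed
  have an: "a \<notin> set (m @ [b])"
  proof
    assume "a \<in> set (m @ [b])"
    hence "set (tl w) = set w" using w by auto
    thus False using c ct by simp
  qed
  have ab: "a \<noteq> b" using an by auto
  have sw: "set w = insert a (insert b (set m))" using w by auto
  have am: "a \<notin> set m" "b \<notin> set m" using an bn by auto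
  have "card (set m) = 1" using c am ab unfolding sw by (simp add: card_insert_if)
  then obtain cc where scc: "set m = {cc}" using card_1_singletonE by blast
  have mr: "m = replicate (n - 1) cc" using scc lm
    by (metis replicate_length_same singletonD)
  have cab: "cc \<noteq> a" "cc \<noteq> b" using am scc by auto
  define f where "f = (\<lambda>z. if z = a then 0 else if z = b then 2 else (1::nat))"
  have bf: "bij_betw f (set w) {0,1,2}" unfolding sw scc f_def bij_betw_def inj_on_def
    using ab cab by auto
  have mf: "map f w = [0] @ replicate (Suc n - 2) 1 @ [2]"
    unfolding w mr f_def using ab cab by (simp add: map_replicate_const)
  show ?thesis
  proof (cases "Suc n mod 3 = 0")
    case True
    define q where "q = Suc n div 3"
    have q: "Suc n = 3 * q" using True unfolding q_def by presburger
    have q4: "q \<ge> 4" using q n9 by linarith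
    have "Suc n - 2 = 3 * q - 2" using q by simp
    hence "has_3antipower_factor (map f w)" using mod0_cases(16)[OF q4] mf by simp
    hence False using nh has_map by metis
    thus ?thesis ..
  next
    case False
    hence "map f w \<in> L (Suc n)" unfolding mf L_def by auto
    thus ?thesis using bf by blast
  qed
qed



lemma main_L:
  "n \<ge> 9 \<Longrightarrow> \<forall>w::'a list. length w = n \<longrightarrow> \<not> has_3antipower_factor w \<longrightarrow> card (set w) = 3 \<longrightarrow>
       (\<exists>f. bij_betw f (set w) {0,1,2::nat} \<and> map f w \<in> L n)"
proof (induction n rule: nat_induct_at_least)
  case base
  show ?case
  proof (intro allI impI)
    fix w :: "'a list"
    assume lw: "length w = 9" and nh: "\<not> has_3antipower_factor w" and c: "card (set w) = 3"
    obtain f where f: "bij_betw f (set w) {0,1,2::nat}" using card3_bij c by blast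
    have "set (map f w) = {0,1,2}" using f by (simp add: bij_betw_def)
    hence "has_3antipower_factor (map f w)" using base9[of "map f w"] lw by simp
    hence False using nh has_map by metis
    thus "\<exists>f. bij_betw f (set w) {0,1,2::nat} \<and> map f w \<in> L 9" ..
  qed
next
  case (Suc n)
  have IH: "\<And>u::'a list. length u = n \<Longrightarrow> \<not> has_3antipower_factor u \<Longrightarrow> card (set u) = 3 \<Longrightarrow>
       \<exists>f. bij_betw f (set u) {0,1,2::nat} \<and> map f u \<in> L n" using Suc.IH by blast
  show ?case
  proof (intro allI impI)
    fix w :: "'a list"
    assume lw: "length w = Suc n" and nh: "\<not> has_3antipower_factor w" and c: "card (set w) = 3"
    show "\<exists>f. bij_betw f (set w) {0,1,2::nat} \<and> map f w \<in> L (Suc n)"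
    proof (cases "card (set (butlast w)) = 3")
      case True
      show ?thesis by (rule step_right[OF IH Suc.hyps lw nh c True])
    next
      case nb: False
      show ?thesis
      proof (cases "card (set (tl w)) = 3")
        case True
        have l: "length (rev w) = Suc n" using lw by simp
        have h: "\<not> has_3antipower_factor (rev w)" using nh has_rev by blast
        have cr: "card (set (rev w)) = 3" using c by simp
        have cb: "card (set (butlast (rev w))) = 3" using True by (simp add: butlast_rev)
        obtain f where f: "bij_betw f (set (rev w)) {0,1,2::nat}" "map f (rev w) \<in> L (Suc n)"
          using step_right[OF IH Suc.hyps l h cr cb] by blast
        obtain g where g: "bij_betw g {0,1,2} {0,1,2::nat}" "map g (rev (map f (rev w))) \<in> L (Suc n)"
          using L_rev[OF f(2)] by blast
        have "map (g \<circ> f) w \<in> L (Suc n)" using g(2) by (simp add: rev_map)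
        moreover have "bij_betw f (set w) {0,1,2::nat}" using f(1) by simp
        hence "bij_betw (g \<circ> f) (set w) {0,1,2}" using g(1) by (rule bij_betw_trans)
        ultimately show ?thesis by blast
      next
        case False
        show ?thesis by (rule both_unique[OF Suc.hyps lw nh c nb False])
      qed
    qed
  qed
qed

theorem theorem9:
  fixes w :: "'a list" and n :: nat
  assumes "length w = n" and "n \<ge> 9"
    and "\<not> has_3antipower_factor w"
    and "card (set w) = 3"
  shows "n mod 3 \<noteq> 0
    \<and> (n mod 3 = 1 \<longrightarrow> (\<exists>f. bij_betw f (set w) {0, 1, 2 :: nat} \<and>
           map f w = [0] @ replicate (n - 2) 1 @ [2]))
    \<and> (n mod 3 = 2 \<longrightarrow> (\<exists>f. bij_betw f (set w) {0, 1, 2 :: nat} \<and>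
           map f w \<in> { [0, 0] @ replicate (n - 3) 1 @ [2],
                        [0, 1] @ replicate (n - 3) 0 @ [2],
                        [0] @ replicate (n - 2) 1 @ [2],
                        [0] @ replicate (n - 3) 1 @ [2, 1],
                        [0] @ replicate (n - 3) 1 @ [2, 2] }))"
proof -
  obtain f where f: "bij_betw f (set w) {0,1,2::nat}" "map f w \<in> L n"
    using main_L[OF assms(2), rule_format, OF assms(1) assms(3) assms(4)] by blast
  have "n mod 3 \<noteq> 0" using f(2) unfolding L_def by (auto split: if_splits)
  moreover have "n mod 3 = 1 \<longrightarrow> map f w = [0] @ replicate (n - 2) 1 @ [2]"
    using f(2) by (auto simp: L_def)
  moreover have "n mod 3 = 2 \<longrightarrow> map f w \<in> { [0, 0] @ replicate (n - 3) 1 @ [2],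
                        [0, 1] @ replicate (n - 3) 0 @ [2],
                        [0] @ replicate (n - 2) 1 @ [2],
                        [0] @ replicate (n - 3) 1 @ [2, 1],
                        [0] @ replicate (n - 3) 1 @ [2, 2] }"
    using f(2) unfolding L_def by auto
  ultimately show ?thesis using f(1) by blast
qed

end
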